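(* Let $k\geq 4$ and let $\alpha>0$ be sufficiently small. There exist infinitely many integers $N\geq 1$ and sets $A\subseteq \{1,2,\dots,N\}$ with $|A|\geq \alpha N$ such that $A$ contains no more than \[\exp\bigl(-c\log^2(2/\alpha)\bigr)N^{k-1}\] solutions $(x_1,\dots,x_k)\in A^k$ to the equation $x_1+\cdots+x_{k-1}=(k-1)x_k$, where $c>0$ is a constant. *)

theory Defs
  imports Complex_Main "HOL-Library.FuncSet"
begin

text \<open>A tuple is represented as a function on the index set \<open>{0..<k}\<close> (extensional,
  undefined outside), where index \<open>i\<close> stands for \<open>x_{i+1}\<close>; the last variable
  \<open>x_k\<close> is at index \<open>k-1\<close>.\<close>
definition solutions :: "nat \<Rightarrow> int set \<Rightarrow> (nat \<Rightarrow> int) set" where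
  "solutions k A = {x \<in> {0..<k} \<rightarrow>\<^sub>E A.
      (\<Sum>i<k - 1. x i) = int (k - 1) * x (k - 1)}"

definition num_solutions :: "nat \<Rightarrow> int set \<Rightarrow> nat" where
  "num_solutions k A = card (solutions k A)"

end

theory Submission
  imports Defs "HOL-Library.Infinite_Set"
begin

lemma params:
  fixes K :: nat and x :: real
  assumes K3: "K \<ge> 3" and xb: "x \<ge> 16 * ln K"
  defines "n \<equiv> nat \<lfloor>x / (8 * ln K)\<rfloor>" and "d \<equiv> nat \<lfloor>exp (x / 8)\<rfloor>"
  shows "n \<ge> 1" "d \<ge> 1" "2 * exp (-x) * real K ^ (n + 1) * real n * real d ^ 2 \<le> 1"
    "exp (x\<^sup>2 / (256 * ln K)) \<le> real d ^ n"
proof -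
  have lK: "ln (real K) \<ge> 1"
  proof -
    have "exp 1 \<le> (3::real)" using exp_le by simp
    also have "\<dots> \<le> real K" using K3 by simp
    finally have "exp 1 \<le> real K" .
    then have "ln (exp 1) \<le> ln (real K)" using K3 by (subst ln_le_cancel_iff) auto
    then show ?thesis by simp
  qed
  have x16: "x \<ge> 16" using xb lK by linarith
  have xpos: "x > 0" using x16 by simp
  define q where "q = x / (8 * ln K)"
  have q0: "q \<ge> 0" using xpos lK by (simp add: q_def)
  have nle: "real n \<le> q" using q0 by (simp add: n_def q_def)
  have nge: "real n \<ge> q - 1" using q0 unfolding n_def q_def by linarith
  have qq: "q - 1 \<ge> x / (16 * ln K)"
  proof -
    have "x / (16 * ln K) \<ge> 1" using xb lK by (simp add: field_simps)
    moreover have "q = 2 * (x / (16 * ln K))" by (simp add: q_def field_simps)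
    ultimately show ?thesis by linarith
  qed
  have ngq: "real n \<ge> x / (16 * ln K)" using nge qq by linarith
  have "x / (16 * ln K) \<ge> 1" using xb lK by (simp add: field_simps)
  then show n1: "n \<ge> 1" using ngq by linarith
  define y where "y = exp (x / 16)"
  have y2: "y \<ge> 2"
  proof -
    have "exp (1::real) \<ge> 2" using exp_ge_add_one_self[of 1] by simp
    moreover have "exp 1 \<le> y" unfolding y_def using x16 by simp
    ultimately show ?thesis by linarith
  qed
  have e8: "exp (x / 8) = y ^ 2"
    unfolding y_def by (simp add: power2_eq_square flip: exp_add)
  have e8p: "exp (x/8) \<ge> 0" by simp
  have dle: "real d \<le> exp (x / 8)" unfolding d_def using e8p by linarith
  have dge: "real d \<ge> exp (x / 8) - 1" unfolding d_def using e8p by linarith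
  have yy: "y * y \<ge> 2 * y" using y2 by (intro mult_right_mono) auto
  have yy2: "y * y - 1 \<ge> y" using yy y2 by linarith
  have "real d \<ge> y * y - 1" using dge e8 by (simp add: power2_eq_square)
  then have dy: "real d \<ge> y" using yy2 by linarith
  then show d1: "d \<ge> 1" using y2 by linarith
  have Kn: "real K ^ n \<le> exp (x / 8)"
  proof -
    have "real K ^ n = exp (real n * ln K)" using K3 by (simp add: exp_of_nat_mult)
    also have "\<dots> \<le> exp (q * ln K)" using nle lK by (intro exp_mono mult_right_mono) auto
    also have "q * ln K = x / 8" using lK by (simp add: q_def)
    finally show ?thesis .
  qed
  have nx: "real n \<le> exp (x / 8)"
  proof -
    have "q \<le> x / 8" using lK xpos by (simp add: q_def field_simps)
    moreover have "x / 8 \<le> exp (x / 8)" using exp_ge_add_one_self[of "x/8"] by linarith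
    ultimately show ?thesis using nle by linarith
  qed
  have d2: "real d ^ 2 \<le> exp (x/8) * exp (x/8)"
    using dle by (simp add: power2_eq_square mult_mono)
  have "2 * exp (-x) * real K ^ (n + 1) * real n * real d ^ 2
      = 2 * real K * exp (-x) * (real K ^ n * real n * real d ^ 2)" by simp
  also have "\<dots> \<le> 2 * real K * exp (-x) * (exp (x/8) * exp (x/8) * (exp (x/8) * exp (x/8)))"
    using Kn nx d2 by (intro mult_left_mono mult_mono) auto
  also have "\<dots> = 2 * real K * exp (-x/2)" by (simp flip: exp_add)
  also have "\<dots> \<le> 1"
  proof -
    have "exp (x/2) \<ge> exp (8 * ln K)" using xb by simp
    also have "exp (8 * ln K) = real K ^ 8" using K3 by (simp add: exp_of_nat_mult[of 8, simplified])
    finally have h: "exp (x/2) \<ge> real K ^ 8" .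
    have "real K ^ 8 \<ge> 2 * real K"
    proof -
      have e: "real K ^ 8 = real K * real K ^ 7" by (simp flip: power_Suc)
      have "real K ^ 7 \<ge> real K" using K3 by (intro self_le_power) auto
      then have "real K ^ 7 \<ge> 2" using K3 by linarith
      then have "real K * real K ^ 7 \<ge> real K * 2" by (intro mult_left_mono) auto
      then show ?thesis using e by simp
    qed
    then have "2 * real K \<le> exp (x/2)" using h by linarith
    then have "2 * real K * exp (-x/2) \<le> exp (x/2) * exp (-x/2)" by (intro mult_right_mono) auto
    also have "\<dots> = 1" by (simp flip: exp_add)
    finally show ?thesis .
  qed
  finally show "2 * exp (-x) * real K ^ (n + 1) * real n * real d ^ 2 \<le> 1" .
  have "exp (x\<^sup>2 / (256 * ln K)) = exp ((x / (16 * ln K)) * (x / 16))"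
    by (simp add: power2_eq_square field_simps)
  also have "\<dots> \<le> exp (real n * (x / 16))" using ngq xpos by (intro exp_mono mult_right_mono) auto
  also have "\<dots> = y ^ n" unfolding y_def by (rule exp_of_nat_mult)
  also have "\<dots> \<le> real d ^ n" using dy y2 by (intro power_mono) auto
  finally show "exp (x\<^sup>2 / (256 * ln K)) \<le> real d ^ n" .
qed

lemma block_zero:
  fixes M t s :: int
  assumes "M > 0" "M * t = s" "\<bar>s\<bar> < M"
  shows "t = 0"
proof (rule ccontr)
  assume "t \<noteq> 0"
  then have "\<bar>t\<bar> \<ge> 1" by simp
  then have "\<bar>M * t\<bar> \<ge> M" using assms(1) by (simp add: abs_mult mult_le_cancel_left1)
  then show False using assms by simp
qed

lemma digits_zero:
  fixes u :: "nat \<Rightarrow> int" and D :: int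
  assumes "D > 0" "\<forall>j<n. \<bar>u j\<bar> < D" "(\<Sum>j<n. u j * D ^ j) = 0"
  shows "\<forall>j<n. u j = 0"
  using assms(2,3)
proof (induction n arbitrary: u)
  case 0
  then show ?case by simp
next
  case (Suc n)
  have split: "(\<Sum>j<Suc n. u j * D ^ j) = u 0 + D * (\<Sum>j<n. u (Suc j) * D ^ j)"
    by (simp only: sum.lessThan_Suc_shift) (simp add: sum_distrib_left mult_ac)
  have dv: "D dvd u 0"
  proof -
    have "u 0 = - (D * (\<Sum>j<n. u (Suc j) * D ^ j))" using Suc.prems(2) split by simp
    then show ?thesis by (metis dvd_minus_iff dvd_triv_left)
  qed
  have ab: "\<bar>u 0\<bar> < D" using Suc.prems(1) by simp
  obtain q where q: "u 0 = D * q" using dv by (auto elim: dvdE)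
  have "q = 0" by (rule block_zero[of D q "u 0"]) (use assms(1) q ab in auto)
  then have u0: "u 0 = 0" using q by simp
  then have "D * (\<Sum>j<n. u (Suc j) * D ^ j) = 0" using Suc.prems(2) split by simp
  then have h2: "(\<Sum>j<n. u (Suc j) * D ^ j) = 0" using assms(1) by simp
  have h1: "\<forall>j<n. \<bar>u (Suc j)\<bar> < D" using Suc.prems(1) by simp
  have us: "\<forall>j<n. u (Suc j) = 0" using Suc.IH[of "\<lambda>j. u (Suc j)", OF h1 h2] .
  show ?case
  proof (intro allI impI)
    fix j assume "j < Suc n"
    then show "u j = 0" using u0 us by (cases j) auto
  qed
qed

lemma digits_bound:
  fixes u :: "nat \<Rightarrow> int" and D :: int
  assumes "\<forall>j<n. 0 \<le> u j \<and> u j \<le> D - 1"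
  shows "0 \<le> (\<Sum>j<n. u j * D ^ j) \<and> (\<Sum>j<n. u j * D ^ j) \<le> D ^ n - 1"
  using assms
proof (induction n)
  case 0
  then show ?case by simp
next
  case (Suc n)
  have D1: "D \<ge> 1" using Suc.prems by auto
  have ih: "0 \<le> (\<Sum>j<n. u j * D ^ j) \<and> (\<Sum>j<n. u j * D ^ j) \<le> D ^ n - 1"
    using Suc by simp
  have un: "0 \<le> u n" "u n \<le> D - 1" using Suc.prems by auto
  have "u n * D ^ n \<le> (D - 1) * D ^ n" using un D1 by (intro mult_right_mono) auto
  moreover have "0 \<le> u n * D ^ n" using un D1 by simp
  ultimately show ?case using ih by (simp add: algebra_simps)
qed

lemma construction:
  fixes K n d L :: nat
  assumes K2: "K \<ge> 2" and n1: "n \<ge> 1" and d1: "d \<ge> 1" and L1: "L \<ge> 1"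
  shows "\<exists>A \<subseteq> {1..int (K*L*(K*d)^n)}. L * d^n \<le> card A * (n * d^2)
           \<and> num_solutions (Suc K) A \<le> d^n * L^K"
proof -
  define D where "D = K*d"
  define P where "P = ({0..<n} \<rightarrow>\<^sub>E {0..<d})"
  define s where "s v = (\<Sum>j<n. (v j)^2)" for v :: "nat \<Rightarrow> nat"
  define M where "M = n*(d-1)^2"
  define S where "S R = {v\<in>P. s v = R}" for R
  have finP: "finite P" by (simp add: P_def finite_PiE)
  have cardP: "card P = d^n" by (simp add: P_def card_PiE)
  have Pd: "v j \<le> d - 1" if "v \<in> P" "j < n" for v j
  proof -
    have "v j < d" using that by (auto simp: P_def PiE_iff)
    then show ?thesis by linarith
  qed
  have sM: "s v \<le> M" if "v \<in> P" for v
  proof -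
    have "s v \<le> of_nat (card {..<n}) * (d-1)^2" unfolding s_def
      by (rule sum_bounded_above) (use Pd[OF that] in \<open>simp add: power_mono\<close>)
    then show ?thesis by (simp add: M_def)
  qed
  have P_Un: "P = (\<Union>R\<in>{..M}. S R)" using sM unfolding S_def by auto
  have SP: "S R \<subseteq> P" for R unfolding S_def by auto
  have cSP: "card (S R) \<le> card P" for R using SP finP by (rule card_mono[rotated])
  obtain R where RM: "R \<le> M" and Rmax: "\<forall>R'. R' \<le> M \<longrightarrow> card (S R') \<le> card (S R)"
    using ex_has_greatest_nat[of "\<lambda>R. R \<le> M" 0 "\<lambda>R. card (S R)" "card P + 1"] cSP
    by (auto simp: less_Suc_eq_le)
  have "card P \<le> (\<Sum>R'\<in>{..M}. card (S R'))"
    by (subst P_Un) (rule card_UN_le, simp)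
  also have "\<dots> \<le> of_nat (card {..M}) * card (S R)" by (rule sum_bounded_above) (use Rmax in auto)
  finally have dnS: "d^n \<le> (M+1) * card (S R)" using cardP by simp
  have M1: "M + 1 \<le> n * d^2"
  proof -
    obtain e where e: "d = Suc e" using d1 by (cases d) auto
    have "M + 1 \<le> n * e^2 + n" using n1 by (simp add: M_def e)
    also have "\<dots> \<le> n * d^2" using e by (simp add: power2_eq_square algebra_simps)
    finally show ?thesis .
  qed
  have dnS2: "d^n \<le> card (S R) * (n * d^2)"
    using dnS M1 by (metis le_trans mult.commute mult_le_mono1)
  define \<beta> where "\<beta> v = (\<Sum>j<n. int (v j) * int D ^ j)" for v
  define f where "f = (\<lambda>(v,r). int (K*L) * \<beta> v + int r)"
  define A where "A = f ` (S R \<times> {1..L})"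
  have dD: "d \<le> D" unfolding D_def using mult_le_mono1[of 1 K d] K2 by simp
  have Dpos: "int D > 0" using K2 d1 by (simp add: D_def)
  have \<beta>b: "0 \<le> \<beta> v \<and> \<beta> v \<le> int D ^ n - 1" if "v \<in> P" for v
    unfolding \<beta>_def
  proof (rule digits_bound, intro allI impI)
    fix j assume "j < n"
    then have "v j \<le> d - 1" using Pd that by auto
    moreover have "d - 1 \<le> D - 1" using dD by simp
    ultimately show "0 \<le> int (v j) \<and> int (v j) \<le> int D - 1" using Dpos by linarith
  qed
  have KLpos: "int (K*L) > 0" using K2 L1 by simp
  have LKL: "L \<le> K*L" using K2 by simp
  have LKLi: "int L \<le> int (K*L)" using LKL by (simp only: of_nat_le_iff)
  have NKL: "int (K*L*(K*d)^n) = int (K*L) * int D ^ n" by (simp add: D_def)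
  have inj\<beta>: "v = w" if "v \<in> P" "w \<in> P" "\<beta> v = \<beta> w" for v w
  proof -
    have h2: "(\<Sum>j<n. (int (v j) - int (w j)) * int D ^ j) = 0"
      using that(3) by (simp add: \<beta>_def left_diff_distrib sum_subtractf)
    have h1: "\<forall>j<n. \<bar>int (v j) - int (w j)\<bar> < int D"
    proof (intro allI impI)
      fix j assume "j < n"
      then have "v j \<le> d - 1" "w j \<le> d - 1" using Pd that by auto
      moreover note dD
      ultimately show "\<bar>int (v j) - int (w j)\<bar> < int D" using d1 by linarith
    qed
    have z: "\<forall>j<n. int (v j) - int (w j) = 0"
      using digits_zero[OF Dpos h1 h2] .
    show "v = w"
    proof (rule PiE_ext)
      show "v \<in> {0..<n} \<rightarrow>\<^sub>E {0..<d}" "w \<in> {0..<n} \<rightarrow>\<^sub>E {0..<d}" using that(1,2) by (auto simp: P_def)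
      fix j assume "j \<in> {0..<n}" then show "v j = w j" using z by simp
    qed
  qed
  have injf: "inj_on f (S R \<times> {1..L})"
  proof (rule inj_onI, clarify)
    fix v r w r' assume a: "v \<in> S R" "r \<in> {1..L}" "w \<in> S R" "r' \<in> {1..L}" "f (v, r) = f (w, r')"
    have "int (K*L) * (\<beta> v - \<beta> w) = int r' - int r" using a(5) by (simp add: f_def algebra_simps)
    moreover have "\<bar>int r' - int r\<bar> < int (K*L)"
    proof -
      show ?thesis using a(2,4) LKLi unfolding atLeastAtMost_iff abs_less_iff by linarith
    qed
    ultimately have "\<beta> v - \<beta> w = 0" using block_zero[OF KLpos] by blast
    then have "v = w" using inj\<beta> a SP by auto
    then show "v = w \<and> r = r'" using a(5) by (simp add: f_def)
  qed
  have finS: "finite (S R)" using SP finP by (rule finite_subset)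
  have cardA: "card A = card (S R) * L"
    unfolding A_def using injf by (simp add: card_image card_cartesian_product)
  have Asub: "A \<subseteq> {1..int (K*L*(K*d)^n)}"
  proof
    fix a assume "a \<in> A"
    then obtain v r where vr: "v \<in> S R" "r \<in> {1..L}" "a = int (K*L) * \<beta> v + int r"
      unfolding A_def f_def by auto
    have b: "0 \<le> \<beta> v" "\<beta> v \<le> int D ^ n - 1" using \<beta>b vr(1) SP by auto
    have "int (K*L) * \<beta> v \<le> int (K*L) * (int D ^ n - 1)" using b KLpos by (intro mult_left_mono) auto
    then have "a \<le> int (K*L) * int D ^ n - int (K*L) + int L" using vr by (simp add: algebra_simps)
    also have "\<dots> \<le> int (K*L*(K*d)^n)" unfolding NKL using LKLi by linarith
    finally have hi: "a \<le> int (K*L*(K*d)^n)" .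
    have nn: "0 \<le> int (K*L) * \<beta> v" using b KLpos by simp
    have "1 \<le> a" using vr(2,3) nn by simp
    then show "a \<in> {1..int (K*L*(K*d)^n)}" using hi by simp
  qed
  define I where "I v = {int (K*L) * \<beta> v + 1 .. int (K*L) * \<beta> v + int L}" for v
  define T where "T v = {x \<in> {0..<Suc K} \<rightarrow>\<^sub>E I v. (\<Sum>i<K. x i) = int K * x K}" for v
  have cardI: "card (I v) = L" for v by (simp add: I_def)
  have finI: "finite (I v)" for v by (simp add: I_def)
  have solsub: "solutions (Suc K) A \<subseteq> (\<Union>v\<in>S R. T v)"
  proof
    fix x assume "x \<in> solutions (Suc K) A"
    then have xE: "x \<in> {0..<Suc K} \<rightarrow>\<^sub>E A" and eq: "(\<Sum>i<K. x i) = int K * x K"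
      by (auto simp: solutions_def)
    have "\<forall>i\<in>{..K}. \<exists>p. p \<in> S R \<times> {1..L} \<and> x i = f p"
    proof
      fix i assume "i \<in> {..K}"
      then have "x i \<in> A" using xE by (auto simp: PiE_iff)
      then obtain p where "p \<in> S R \<times> {1..L}" "x i = f p" unfolding A_def by blast
      then show "\<exists>p. p \<in> S R \<times> {1..L} \<and> x i = f p" by blast
    qed
    then obtain F where F: "\<forall>i\<in>{..K}. F i \<in> S R \<times> {1..L} \<and> x i = f (F i)"
      by (metis bchoice)
    define V where "V i = fst (F i)" for i
    define Q where "Q i = snd (F i)" for i
    have VS: "V i \<in> S R" and Q1: "1 \<le> Q i" and QL: "Q i \<le> L"
      and xi: "x i = int (K*L) * \<beta> (V i) + int (Q i)" if "i \<le> K" for i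
    proof -
      have h: "F i \<in> S R \<times> {1..L}" "x i = f (F i)" using F that by auto
      have Fi: "fst (F i) \<in> S R \<and> 1 \<le> snd (F i) \<and> snd (F i) \<le> L \<and>
          x i = int (K*L) * \<beta> (fst (F i)) + int (snd (F i))"
        using h by (cases "F i") (simp add: f_def)
      then show "V i \<in> S R" "1 \<le> Q i" "Q i \<le> L" "x i = int (K*L) * \<beta> (V i) + int (Q i)"
        by (simp_all add: V_def Q_def)
    qed
    have VP: "V i \<in> P" if "i \<le> K" for i using VS[OF that] SP by auto
    have sV: "s (V i) = R" if "i \<le> K" for i using VS[OF that] by (simp add: S_def)
    have sumx: "(\<Sum>i<K. x i) = int (K*L) * (\<Sum>i<K. \<beta> (V i)) + (\<Sum>i<K. int (Q i))"
      by (simp add: xi sum.distrib sum_distrib_left)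
    have e1: "int (K*L) * ((\<Sum>i<K. \<beta> (V i)) - int K * \<beta> (V K)) = int K * int (Q K) - (\<Sum>i<K. int (Q i))"
      using eq sumx xi[of K] by (simp add: algebra_simps)
    have Q1': "\<forall>i<K. 1 \<le> Q i \<and> Q i \<le> L" using Q1 QL by auto
    have sQ1: "(\<Sum>i<K. int (Q i)) \<ge> of_nat (card {..<K}) * 1"
      by (rule sum_bounded_below) (use Q1' in auto)
    have sQ2: "(\<Sum>i<K. int (Q i)) \<le> of_nat (card {..<K}) * int L"
      by (rule sum_bounded_above) (use Q1' in auto)
    have QK: "int K * int (Q K) \<le> int K * int L" using QL[of K] by (intro mult_left_mono) auto
    have QK1: "int K * int (Q K) \<ge> int K * 1" using Q1[of K] by (intro mult_left_mono) auto
    have Kpos: "int K \<ge> 1" using K2 by simp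
    have "\<bar>int K * int (Q K) - (\<Sum>i<K. int (Q i))\<bar> < int (K*L)"
    proof -
      have a1: "(\<Sum>i<K. int (Q i)) \<ge> int K" using sQ1 by simp
      have a2: "(\<Sum>i<K. int (Q i)) \<le> int K * int L" using sQ2 by simp
      show ?thesis using a1 a2 QK QK1 Kpos unfolding abs_less_iff of_nat_mult by linarith
    qed
    then have bsum: "(\<Sum>i<K. \<beta> (V i)) - int K * \<beta> (V K) = 0"
      using block_zero[OF KLpos e1] by simp
    define a where "a i j = int (V i j)" for i j
    have expand: "(\<Sum>i<K. \<beta> (V i)) - int K * \<beta> (V K)
        = (\<Sum>j<n. ((\<Sum>i<K. a i j) - int K * a K j) * int D ^ j)"
    proof -
      have "(\<Sum>i<K. \<beta> (V i)) = (\<Sum>j<n. (\<Sum>i<K. a i j) * int D ^ j)"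
        unfolding \<beta>_def a_def by (simp add: sum_distrib_right sum.swap[of _ "{..<K}"])
      moreover have "int K * \<beta> (V K) = (\<Sum>j<n. (int K * a K j) * int D ^ j)"
        unfolding \<beta>_def a_def by (simp add: sum_distrib_left mult.assoc)
      ultimately show ?thesis by (simp add: left_diff_distrib sum_subtractf)
    qed
    have coefb: "\<forall>j<n. \<bar>(\<Sum>i<K. a i j) - int K * a K j\<bar> < int D"
    proof (intro allI impI)
      fix j assume j: "j < n"
      have aij: "0 \<le> a i j \<and> a i j \<le> int d - 1" if "i \<le> K" for i
        using Pd[OF VP[OF that] j] d1 by (simp add: a_def)
      have s1: "(\<Sum>i<K. a i j) \<le> of_nat (card {..<K}) * (int d - 1)"
        by (rule sum_bounded_above) (use aij in simp)
      have s2: "(\<Sum>i<K. a i j) \<ge> 0" by (rule sum_nonneg) (use aij in simp)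
      have k1: "int K * a K j \<le> int K * (int d - 1)" using aij[of K] by (intro mult_left_mono) auto
      have k2: "int K * a K j \<ge> 0" using aij[of K] by simp
      have DK: "int D = int K * int d" by (simp add: D_def)
      show "\<bar>(\<Sum>i<K. a i j) - int K * a K j\<bar> < int D"
        using s1 s2 k1 k2 Kpos unfolding DK abs_less_iff by (simp add: algebra_simps)
    qed
    have coef0: "\<forall>j<n. (\<Sum>i<K. a i j) - int K * a K j = 0"
      using digits_zero[OF Dpos coefb] bsum expand by simp
    have sqs: "(\<Sum>i<K. (\<Sum>j<n. (a i j - a K j)^2)) = 0"
    proof -
      have sa: "(\<Sum>j<n. (a i j)^2) = int R" if "i \<le> K" for i
      proof -
        have "int (s (V i)) = (\<Sum>j<n. (a i j)^2)" by (simp add: s_def a_def of_nat_sum)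
        then show ?thesis using sV[OF that] by simp
      qed
      have "(\<Sum>i<K. (\<Sum>j<n. (a i j - a K j)^2))
          = (\<Sum>i<K. (\<Sum>j<n. (a i j)^2)) - 2 * (\<Sum>i<K. (\<Sum>j<n. a i j * a K j)) + (\<Sum>i<K. (\<Sum>j<n. (a K j)^2))"
        by (simp add: power2_diff sum.distrib sum_subtractf sum_distrib_left algebra_simps)
      also have "(\<Sum>i<K. (\<Sum>j<n. a i j * a K j)) = (\<Sum>j<n. (\<Sum>i<K. a i j) * a K j)"
        by (simp add: sum_distrib_right sum.swap[of _ "{..<K}"])
      also have "\<dots> = (\<Sum>j<n. int K * (a K j)^2)"
        using coef0 by (intro sum.cong) (auto simp: power2_eq_square)
      also have "\<dots> = int K * int R" using sa[of K] by (simp flip: sum_distrib_left)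
      also have "(\<Sum>i<K. (\<Sum>j<n. (a i j)^2)) = int K * int R" using sa by simp
      also have "(\<Sum>i<K. (\<Sum>j<n. (a K j)^2)) = int K * int R" using sa[of K] by simp
      finally show ?thesis by simp
    qed
    have allsame: "a i j = a K j" if "i < K" "j < n" for i j
    proof -
      have "\<forall>i\<in>{..<K}. (\<Sum>j<n. (a i j - a K j)^2) = 0"
        using sqs by (subst sum_nonneg_eq_0_iff[symmetric]) (auto intro: sum_nonneg)
      then have "(\<Sum>j<n. (a i j - a K j)^2) = 0" using that by simp
      then have "\<forall>j\<in>{..<n}. (a i j - a K j)^2 = 0" by (subst sum_nonneg_eq_0_iff[symmetric]) auto
      then show ?thesis using that by simp
    qed
    have \<beta>same: "\<beta> (V i) = \<beta> (V K)" if "i < K" for i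
      unfolding \<beta>_def using allsame[OF that] by (intro sum.cong) (auto simp: a_def)
    have "x \<in> T (V K)"
      unfolding T_def
    proof (intro CollectI conjI)
      show "(\<Sum>i<K. x i) = int K * x K" by (rule eq)
      show "x \<in> {0..<Suc K} \<rightarrow>\<^sub>E I (V K)"
        unfolding PiE_iff
      proof (intro conjI ballI)
        show "x \<in> extensional {0..<Suc K}" using xE by (simp add: PiE_iff)
        fix i assume "i \<in> {0..<Suc K}"
        then have iK: "i \<le> K" by simp
        have bi: "\<beta> (V i) = \<beta> (V K)" using \<beta>same iK by (cases "i = K") auto
        show "x i \<in> I (V K)" using xi[OF iK] Q1[OF iK] QL[OF iK] bi by (simp add: I_def)
      qed
    qed
    then show "x \<in> (\<Union>v\<in>S R. T v)" using VS[of K] by auto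
  qed
  have cardT: "card (T v) \<le> L^K" for v
  proof -
    define X where "X = {0..<Suc K} - {K - 1}"
    have cX: "card X = K" unfolding X_def using K2 by (subst card_Diff_singleton) auto
    have "inj_on (\<lambda>x. restrict x X) (T v)"
    proof (rule inj_onI)
      fix x y assume x: "x \<in> T v" and y: "y \<in> T v" and r: "restrict x X = restrict y X"
      have xy: "x i = y i" if "i \<in> X" for i using fun_cong[OF r, of i] that by simp
      have xK: "x K = y K" using K2 by (intro xy) (auto simp: X_def)
      have low: "(\<Sum>i<K-1. x i) = (\<Sum>i<K-1. y i)" by (intro sum.cong) (auto simp: X_def intro!: xy)
      have sp: "(\<Sum>i<K. z i) = (\<Sum>i<K-1. z i) + z (K-1)" for z :: "nat \<Rightarrow> int"
      proof -
        have "K = Suc (K-1)" using K2 by simp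
        then show ?thesis by (metis sum.lessThan_Suc)
      qed
      have ex: "(\<Sum>i<K. x i) = int K * x K" "(\<Sum>i<K. y i) = int K * y K" using x y by (auto simp: T_def)
      have xK1: "x (K-1) = y (K-1)" using ex sp[of x] sp[of y] low xK by simp
      show "x = y"
      proof
        fix i
        show "x i = y i"
        proof (cases "i \<in> {0..<Suc K}")
          case True
          then show ?thesis using xK1 by (cases "i = K - 1") (auto simp: X_def intro!: xy)
        next
          case False
          then show ?thesis using x y by (auto simp: T_def PiE_iff extensional_def)
        qed
      qed
    qed
    moreover have "(\<lambda>x. restrict x X) ` (T v) \<subseteq> X \<rightarrow>\<^sub>E I v"
    proof
      fix z assume "z \<in> (\<lambda>x. restrict x X) ` (T v)"
      then obtain x where x: "x \<in> T v" "z = restrict x X" by auto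
      have "\<forall>i\<in>X. x i \<in> I v" using x(1) by (auto simp: T_def X_def PiE_iff)
      then show "z \<in> X \<rightarrow>\<^sub>E I v" using x(2) by (simp add: restrict_PiE_iff)
    qed
    moreover have "finite (X \<rightarrow>\<^sub>E I v)" by (simp add: X_def finite_PiE finI)
    ultimately have "card (T v) \<le> card (X \<rightarrow>\<^sub>E I v)" by (rule card_inj_on_le)
    also have "\<dots> = L^K" by (simp add: card_PiE cardI cX X_def)
    finally show ?thesis .
  qed
  have finT: "finite (T v)" for v
    by (rule finite_subset[of _ "{0..<Suc K} \<rightarrow>\<^sub>E I v"]) (auto simp: T_def finite_PiE finI)
  have "num_solutions (Suc K) A \<le> card (\<Union>v\<in>S R. T v)"
    unfolding num_solutions_def using solsub finS finT by (intro card_mono) auto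
  also have "\<dots> \<le> (\<Sum>v\<in>S R. card (T v))" using finS by (rule card_UN_le)
  also have "\<dots> \<le> of_nat (card (S R)) * L^K" by (rule sum_bounded_above) (rule cardT)
  also have "\<dots> \<le> d^n * L^K" using cSP[of R] cardP by simp
  finally have nsol: "num_solutions (Suc K) A \<le> d^n * L^K" .
  have "L * d^n \<le> L * (card (S R) * (n * d^2))" using dnS2 by (rule mult_le_mono2)
  also have "\<dots> = card A * (n * d^2)" using cardA by (simp add: mult_ac)
  finally have "L * d^n \<le> card A * (n * d^2)" .
  then show ?thesis using Asub nsol by blast
qed

theorem theorem4:
  fixes k :: nat
  assumes "k \<ge> 4"
  shows "\<exists>c>0. \<exists>\<alpha>0>0. \<forall>\<alpha>::real. 0 < \<alpha> \<and> \<alpha> < \<alpha>0 \<longrightarrow>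
           infinite {N::nat. N \<ge> 1 \<and> (\<exists>A \<subseteq> {1..int N}.
              real (card A) \<ge> \<alpha> * real N \<and>
              real (num_solutions k A) \<le> exp (- c * (ln (2 / \<alpha>))\<^sup>2) * real N ^ (k - 1))}"
proof -
  define K where "K = k - 1"
  have kK: "k = Suc K" using assms by (simp add: K_def)
  have K3: "K \<ge> 3" using assms by (simp add: K_def)
  have lK: "ln (real K) > 0" using K3 by simp
  define c where "c = 1 / (256 * ln (real K))"
  define \<alpha>0 where "\<alpha>0 = 2 * exp (- (16 * ln (real K)))"
  have cpos: "c > 0" using lK by (simp add: c_def)
  have a0pos: "\<alpha>0 > 0" by (simp add: \<alpha>0_def)
  have main: "infinite {N::nat. N \<ge> 1 \<and> (\<exists>A \<subseteq> {1..int N}.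
              real (card A) \<ge> \<alpha> * real N \<and>
              real (num_solutions k A) \<le> exp (- c * (ln (2 / \<alpha>))\<^sup>2) * real N ^ (k - 1))}"
    if a: "0 < \<alpha>" "\<alpha> < \<alpha>0" for \<alpha> :: real
  proof -
    define x where "x = ln (2 / \<alpha>)"
    have ex: "exp x = 2 / \<alpha>" using a by (simp add: x_def)
    have xb: "x \<ge> 16 * ln K"
    proof -
      have "exp (16 * ln (real K)) = 2 / \<alpha>0" by (simp add: \<alpha>0_def exp_minus field_simps)
      also have "\<dots> \<le> 2 / \<alpha>" using a by (intro divide_left_mono) auto
      finally have "exp (16 * ln (real K)) \<le> exp x" using ex by simp
      then show ?thesis by simp
    qed
    have alx: "\<alpha> = 2 * exp (-x)" using ex a by (simp add: exp_minus field_simps)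
    define n where "n = nat \<lfloor>x / (8 * ln K)\<rfloor>"
    define d where "d = nat \<lfloor>exp (x / 8)\<rfloor>"
    have n1: "n \<ge> 1" and d1: "d \<ge> 1"
      and P3: "2 * exp (-x) * real K ^ (n + 1) * real n * real d ^ 2 \<le> 1"
      and P4: "exp (x\<^sup>2 / (256 * ln K)) \<le> real d ^ n"
      using params[OF K3 xb] by (simp_all add: n_def d_def)
    have K2: "K \<ge> 2" using K3 by simp
    show ?thesis unfolding infinite_nat_iff_unbounded_le
    proof
      fix m
      define L where "L = Suc m"
      define N where "N = K*L*(K*d)^n"
      have L1: "L \<ge> 1" by (simp add: L_def)
      obtain A where Asub: "A \<subseteq> {1..int N}" and cA: "L * d^n \<le> card A * (n * d^2)"
        and ns: "num_solutions (Suc K) A \<le> d^n * L^K"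
        using construction[OF K2 n1 d1 L1] unfolding N_def by blast
      have Kd1: "(K*d)^n \<ge> 1" using K3 d1 by simp
      have NL: "N \<ge> L * d^n"
      proof -
        have "L * d^n \<le> L * (K*d)^n" using K3 by (intro mult_le_mono2 power_mono) auto
        also have "\<dots> \<le> K * (L * (K*d)^n)" using K3 by simp
        finally show ?thesis by (simp add: N_def mult_ac)
      qed
      have dn1: "d^n \<ge> 1" using d1 by simp
      have LLd: "L \<le> L * d^n" using dn1 by simp
      have Nm: "N \<ge> m" using NL LLd unfolding L_def by linarith
      have N1: "N \<ge> 1" using NL LLd L1 by linarith
      have dens: "\<alpha> * real N \<le> real (card A)"
      proof -
        have "real N = real K ^ (n+1) * (real L * real d ^ n)" by (simp add: N_def power_mult_distrib)
        then have "\<alpha> * real N = \<alpha> * real K ^ (n+1) * (real L * real d ^ n)" by simp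
        also have "\<dots> \<le> \<alpha> * real K ^ (n+1) * (real (card A) * (real n * real d ^ 2))"
        proof -
          have "real L * real d ^ n \<le> real (card A) * (real n * real d ^ 2)"
            using of_nat_le_iff[where 'a=real, THEN iffD2, OF cA] by simp
          then show ?thesis using a by (intro mult_left_mono) auto
        qed
        also have "\<dots> = real (card A) * (2 * exp (-x) * real K ^ (n + 1) * real n * real d ^ 2)"
          by (simp add: alx mult_ac)
        also have "\<dots> \<le> real (card A) * 1" using P3 by (intro mult_left_mono) auto
        finally show ?thesis by simp
      qed
      have NK: "L^K * d^n * d^n \<le> N^K"
      proof -
        have "(d^n)^2 \<le> (d^n)^K" using dn1 K2 by (intro power_increasing) auto
        then have "L^K * d^n * d^n \<le> L^K * (d^n)^K" by (simp add: power2_eq_square mult.assoc)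
        also have "\<dots> = (L * d^n)^K" by (simp add: power_mult_distrib)
        also have "\<dots> \<le> N^K" using NL by (intro power_mono) auto
        finally show ?thesis .
      qed
      have bound: "real (num_solutions k A) \<le> exp (- c * (ln (2 / \<alpha>))\<^sup>2) * real N ^ (k - 1)"
      proof -
        have cx: "c * x\<^sup>2 = x\<^sup>2 / (256 * ln K)" by (simp add: c_def)
        have "real (num_solutions k A) \<le> real d ^ n * real L ^ K"
          using of_nat_le_iff[where 'a=real, THEN iffD2, OF ns] kK by simp
        also have "\<dots> \<le> exp (- (c * x\<^sup>2)) * real d ^ n * (real d ^ n * real L ^ K)"
        proof -
          have "1 \<le> exp (- (c * x\<^sup>2)) * real d ^ n"
          proof -
            have "exp (c * x\<^sup>2) \<le> real d ^ n" using P4 cx by simp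
            then have "exp (- (c * x\<^sup>2)) * exp (c * x\<^sup>2) \<le> exp (- (c * x\<^sup>2)) * real d ^ n"
              by (intro mult_left_mono) auto
            then show ?thesis by (simp flip: exp_add)
          qed
          then have "1 * (real d ^ n * real L ^ K) \<le> exp (- (c * x\<^sup>2)) * real d ^ n * (real d ^ n * real L ^ K)"
            by (intro mult_right_mono) auto
          then show ?thesis by simp
        qed
        also have "\<dots> = exp (- (c * x\<^sup>2)) * real (L^K * d^n * d^n)" by (simp add: mult_ac)
        also have "\<dots> \<le> exp (- (c * x\<^sup>2)) * real (N^K)"
        proof -
          have NKr: "real (L^K * d^n * d^n) \<le> real (N^K)" using NK by (simp only: of_nat_le_iff)
          show ?thesis by (rule mult_left_mono[OF NKr]) simp
        qed
        finally show ?thesis by (simp add: x_def kK)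
      qed
      show "\<exists>N'\<ge>m. N' \<in> {N::nat. N \<ge> 1 \<and> (\<exists>A \<subseteq> {1..int N}.
              real (card A) \<ge> \<alpha> * real N \<and>
              real (num_solutions k A) \<le> exp (- c * (ln (2 / \<alpha>))\<^sup>2) * real N ^ (k - 1))}"
        using Nm N1 Asub dens bound by blast
    qed
  qed
  show ?thesis using cpos a0pos main by blast
qed

end
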